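(* Let $k\colon\mathbb{R}\setminus\{0\}\to[0,\infty)$ satisfy: (a) $k$ is $C^2$ on $\mathbb{R}\setminus\{0\}$ and $(1+t^2)^m k^{(n)}(t)$ is bounded for all $m,n\in\{0,1,2\}$; (b) $k$ is increasing on $(-\infty,0)$ and decreasing on $(0,\infty)$; (c) $k$ is strictly positive on $\mathbb{R}\setminus\{0\}$. Then the function $P_k\colon\mathbb{R}\to\mathbb{R}$ is a strictly increasing homeomorphism of $\mathbb{R}$ onto $\mathbb{R}$.
   Context: Notation: $\tilde{k}(t)=\mathrm{sign}(t)k(t)$; $H_k(z)=z+z\int_{\mathbb{R}}\frac{\tilde{k}(t)}{z-t}\mathrm{d}t$ for $z\in\mathbb{C}^+$; $F_k(x+\mathrm{i}y)=\int_{\mathbb{R}}\frac{|t|k(t)}{(x-t)^2+y^2}\mathrm{d}t$ for $x\in\mathbb{R}$, $y>0$; $v_k(x)$ is the unique $y\in(0,\infty)$ with $F_k(x+\mathrm{i}y)=1$ (it exists and is unique under (a)-(c)); $P_k(x)=H_k(x+\mathrm{i}v_k(x))$ for $x\in\mathbb{R}$ (this is real-valued). *)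

theory Defs
  imports "HOL-Analysis.Analysis"
begin

text \<open>The kernel k is a function real => real; only its values on R minus 0 matter.\<close>

definition ktilde :: "(real \<Rightarrow> real) \<Rightarrow> real \<Rightarrow> real" where
  "ktilde k t = sgn t * k t"

definition Hk :: "(real \<Rightarrow> real) \<Rightarrow> complex \<Rightarrow> complex" where
  "Hk k z = z + z * (LINT t|lborel. complex_of_real (ktilde k t) / (z - complex_of_real t))"

definition Fk :: "(real \<Rightarrow> real) \<Rightarrow> real \<Rightarrow> real \<Rightarrow> real" where
  "Fk k x y = (LINT t|lborel. \<bar>t\<bar> * k t / ((x - t)^2 + y^2))"

definition vk :: "(real \<Rightarrow> real) \<Rightarrow> real \<Rightarrow> real" where
  "vk k x = (THE y. 0 < y \<and> Fk k x y = 1)"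

text \<open>P_k(x) = H_k(x + i v_k(x)), which is real-valued; we take its real part.\<close>
definition Pk :: "(real \<Rightarrow> real) \<Rightarrow> real \<Rightarrow> real" where
  "Pk k x = Re (Hk k (Complex x (vk k x)))"

end

theory Submission
  imports Defs "HOL-Probability.Sinc_Integral"
begin

lemma int_inv1: "integrable lborel (\<lambda>x::real. inverse (1 + x^2))"
  using integrable_inverse_1_plus_square by (simp add: set_integrable_def)

lemma "(\<lambda>t::real. (x - t) / ((x-t)^2 + y^2)) \<in> borel_measurable borel"
  by measurable

locale kern =
  fixes k :: "real \<Rightarrow> real" and B :: real
  assumes kcont: "continuous_on (- {0}) k"
    and kbnd: "\<And>t. t \<noteq> 0 \<Longrightarrow> \<bar>(1 + t^2)^2 * k t\<bar> \<le> B"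
    and kpos: "\<And>t. t \<noteq> 0 \<Longrightarrow> 0 < k t"
    and incr: "mono_on {..<0} k"
    and decr: "antimono_on {0<..} k"
begin

definition W where "W t = \<bar>t\<bar> * k t"

lemma B_nonneg: "0 \<le> B" using kbnd[of 1] by simp

lemma k_meas: "(\<lambda>t. indicator (-{0}) t *\<^sub>R k t) \<in> borel_measurable borel"
  by (rule borel_measurable_continuous_on_indicator) (auto intro: kcont)

lemma W_alt: "W t = \<bar>t\<bar> * (indicator (-{0}) t *\<^sub>R k t)"
  by (auto simp: W_def indicator_def)

lemma kt_alt: "ktilde k t = sgn t * (indicator (-{0}) t *\<^sub>R k t)"
  by (auto simp: ktilde_def indicator_def)

lemma W_meas[measurable]: "W \<in> borel_measurable borel"
  unfolding W_alt[abs_def] using k_meas by measurable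

lemma kt_meas[measurable]: "ktilde k \<in> borel_measurable borel"
  unfolding kt_alt[abs_def] using k_meas by measurable

lemma W_pos: "t \<noteq> 0 \<Longrightarrow> 0 < W t" by (simp add: W_def kpos)
lemma W_nonneg: "0 \<le> W t" 
  by (cases "t = 0") (auto simp: W_def kpos less_imp_le)

lemma k_le: assumes "t \<noteq> 0" shows "k t \<le> B * inverse (1 + t^2)^2"
proof -
  have p0: "1 + t^2 \<noteq> 0" by (simp add: add_nonneg_eq_0_iff)
  have p: "0 < (1 + t^2)^2" using p0 by simp
  have "(1 + t^2)^2 * k t \<le> B" using kbnd[OF assms] by simp
  then show ?thesis using p by (simp add: field_simps power_inverse)
qed

lemma W_le: "W t \<le> B * inverse (1 + t^2)"
proof (cases "t = 0")
  case True then show ?thesis using B_nonneg by (simp add: W_def)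
next
  case False
  have a: "\<bar>t\<bar> \<le> 1 + t^2" 
  proof (cases "\<bar>t\<bar> \<le> 1")
    case True
    have "1 \<le> 1 + t^2" by simp
    then show ?thesis using True by linarith
  next
    case False
    then have "\<bar>t\<bar> * 1 \<le> \<bar>t\<bar> * \<bar>t\<bar>" by (intro mult_left_mono) auto
    then show ?thesis by (simp add: power2_eq_square abs_mult_self_eq)
  qed
  have "W t \<le> \<bar>t\<bar> * (B * inverse (1 + t^2)^2)" unfolding W_def
    by (rule mult_left_mono[OF k_le[OF False]]) simp
  also have "\<dots> \<le> (1 + t^2) * (B * inverse (1 + t^2)^2)"
    by (rule mult_right_mono[OF a]) (simp add: B_nonneg)
  also have "\<dots> = B * inverse (1 + t^2)"
  proof -
    have p0: "1 + t^2 \<noteq> 0" by (simp add: add_nonneg_eq_0_iff)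
    have g: "\<And>u::real. u \<noteq> 0 \<Longrightarrow> u * (B * inverse u ^ 2) = B * inverse u" by (simp add: power2_eq_square)
    show ?thesis by (rule g[OF p0])
  qed
  finally show ?thesis .
qed

lemma kt_le: "\<bar>ktilde k t\<bar> \<le> B * inverse (1 + t^2)"
proof (cases "t = 0")
  case True then show ?thesis using B_nonneg by (simp add: ktilde_def)
next
  case False
  have "\<bar>ktilde k t\<bar> = k t" using kpos[OF False] False by (auto simp: ktilde_def sgn_if)
  also have "\<dots> \<le> B * inverse (1 + t^2)^2" by (rule k_le[OF False])
  also have "\<dots> \<le> B * inverse (1 + t^2)"
  proof (rule mult_left_mono)
    have "1 \<le> 1 + t^2" by simp
    then have i: "inverse (1 + t^2) \<le> 1" by (simp add: inverse_le_1_iff)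
    have "0 \<le> inverse (1 + t^2)" by simp
    then show "inverse (1 + t^2)^2 \<le> inverse (1 + t^2)" using i by (simp add: power2_eq_square mult_le_one mult_left_le)
  qed (simp add: B_nonneg)
  finally show ?thesis .
qed

lemma W_int: "integrable lborel W"
  by (rule Bochner_Integration.integrable_bound[OF integrable_mult_right[OF int_inv1, of B]])
     (auto simp: W_nonneg intro!: order.trans[OF W_le abs_ge_self] AE_I2)

lemma kt_int: "integrable lborel (ktilde k)"
  by (rule Bochner_Integration.integrable_bound[OF integrable_mult_right[OF int_inv1, of B]])
     (auto intro!: order.trans[OF kt_le abs_ge_self] AE_I2)

end

context kern begin

definition M where "M = integral\<^sup>L lborel W"

lemma M_nonneg: "0 \<le> M" unfolding M_def by (rule integral_nonneg_AE) (auto simp: W_nonneg)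

lemma intW:
  assumes [measurable]: "h \<in> borel_measurable borel" and hb: "\<And>t. \<bar>h t\<bar> \<le> C"
  shows "integrable lborel (\<lambda>t. W t * h t)"
proof (rule Bochner_Integration.integrable_bound[OF integrable_mult_right[OF W_int, of C]])
  show "AE t in lborel. norm (W t * h t) \<le> norm (C * W t)"
  proof (rule AE_I2)
    fix t
    have "norm (W t * h t) = W t * \<bar>h t\<bar>" by (simp add: abs_mult W_nonneg)
    also have "\<dots> \<le> W t * C" by (rule mult_left_mono[OF hb W_nonneg])
    also have "\<dots> \<le> norm (C * W t)"
      using mult_right_mono[OF abs_ge_self[of C] W_nonneg[of t]] by (simp add: abs_mult W_nonneg mult.commute)
    finally show "norm (W t * h t) \<le> norm (C * W t)" .
  qed
qed measurable

lemma pos_int: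
  fixes f :: "real \<Rightarrow> real"
  assumes fi: "integrable lborel f" and nn: "\<And>t. 0 \<le> f t" and ps: "\<And>t. t \<noteq> 0 \<Longrightarrow> 0 < f t"
  shows "0 < integral\<^sup>L lborel f"
proof -
  have ge: "0 \<le> integral\<^sup>L lborel f" by (rule integral_nonneg_AE) (auto simp: nn)
  have "integral\<^sup>L lborel f \<noteq> 0"
  proof
    assume "integral\<^sup>L lborel f = 0"
    then have "AE t in lborel. f t = 0" using integral_nonneg_eq_0_iff_AE[OF fi] nn by auto
    moreover have "AE t in lborel. t \<noteq> (0::real)" by (rule AE_lborel_singleton)
    ultimately have "AE t in lborel. f t = 0 \<and> t \<noteq> 0" by (simp add: eventually_conj)
    then have "AE t in lborel. t \<in> ({}::real set)" by eventually_elim (use ps in force)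
    then have "emeasure lborel (UNIV::real set) = 0"
      by (subst (asm) AE_iff_measurable[of UNIV]) auto
    then show False by simp
  qed
  then show ?thesis using ge by simp
qed

lemma D_pos: "0 < y \<Longrightarrow> 0 < (x - t)^2 + (y::real)^2" by (simp add: add_nonneg_pos)

lemma inv_D_le: "0 < y \<Longrightarrow> \<bar>inverse ((x - t)^2 + (y::real)^2)\<bar> \<le> inverse (y^2)"
  using D_pos[of y x t] by (simp add: le_imp_inverse_le)

lemma F_eq: "Fk k x y = integral\<^sup>L lborel (\<lambda>t. W t * inverse ((x - t)^2 + y^2))"
  unfolding Fk_def W_def by (simp add: divide_inverse)

lemma F_int: "0 < y \<Longrightarrow> integrable lborel (\<lambda>t. W t * inverse ((x - t)^2 + y^2))"
  by (rule intW[OF _ inv_D_le]) auto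

lemma F_le: assumes "0 < y" shows "Fk k x y \<le> M / y^2"
proof -
  have "Fk k x y \<le> integral\<^sup>L lborel (\<lambda>t. W t * inverse (y^2))"
    unfolding F_eq
    by (rule integral_mono[OF F_int[OF assms]])
       (auto intro!: integrable_mult_left W_int mult_left_mono W_nonneg order.trans[OF abs_ge_self inv_D_le[OF assms]])
  also have "\<dots> = M / y^2" by (simp add: M_def divide_inverse)
  finally show ?thesis .
qed

lemma F_nonneg: "0 \<le> Fk k x y"
  unfolding F_eq by (rule integral_nonneg_AE) (auto intro!: mult_nonneg_nonneg W_nonneg)

lemma F_strict: assumes "0 < y1" "y1 < y2" shows "Fk k x y2 < Fk k x y1"
proof -
  have y2: "0 < y2" using assms by simp
  have "0 < integral\<^sup>L lborel (\<lambda>t. W t * inverse ((x - t)^2 + y1^2) - W t * inverse ((x - t)^2 + y2^2))"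
  proof (rule pos_int)
    show "integrable lborel (\<lambda>t. W t * inverse ((x - t)^2 + y1^2) - W t * inverse ((x - t)^2 + y2^2))"
      using F_int[OF assms(1)] F_int[OF y2] by auto
    have lt: "inverse ((x - t)^2 + y2^2) < inverse ((x - t)^2 + y1^2)" for t
      using assms D_pos[OF assms(1), of x t] by (intro less_imp_inverse_less) (auto intro!: power_strict_mono)
    show "0 \<le> W t * inverse ((x - t)^2 + y1^2) - W t * inverse ((x - t)^2 + y2^2)" for t
      using mult_left_mono[OF less_imp_le[OF lt] W_nonneg[of t]] by simp
    show "0 < W t * inverse ((x - t)^2 + y1^2) - W t * inverse ((x - t)^2 + y2^2)" if "t \<noteq> 0" for t
      using mult_strict_left_mono[OF lt W_pos[OF that]] by simp
  qed
  then show ?thesis unfolding F_eq using F_int[OF assms(1)] F_int[OF y2] by simp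
qed

lemma F_lip:
  assumes a: "0 < a" and y1: "y1 \<in> {a..b}" and y2: "y2 \<in> {a..b}"
  shows "\<bar>Fk k x y1 - Fk k x y2\<bar> \<le> M * (2 * b / a^4) * \<bar>y1 - y2\<bar>"
proof -
  have p1: "0 < y1" and p2: "0 < y2" using a y1 y2 by auto
  let ?L = "2 * b / a^4 * \<bar>y1 - y2\<bar>"
  have pw: "\<bar>W t * inverse ((x - t)^2 + y1^2) - W t * inverse ((x - t)^2 + y2^2)\<bar> \<le> W t * ?L" for t
  proof -
    define D1 where "D1 = (x - t)^2 + y1^2"
    define D2 where "D2 = (x - t)^2 + y2^2"
    have D1p: "0 < D1" and D2p: "0 < D2" unfolding D1_def D2_def using p1 p2 by (simp_all add: add_nonneg_pos)
    have d1: "y1^2 \<le> D1" and d2: "y2^2 \<le> D2" unfolding D1_def D2_def by auto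
    have a1: "a^2 \<le> y1^2" and a2: "a^2 \<le> y2^2" using y1 y2 a by (auto intro!: power_mono)
    have "a^4 = a^2 * a^2" by algebra
    also have "\<dots> \<le> D1 * D2" using d1 d2 a1 a2 D1p D2p by (intro mult_mono) auto
    finally have aD: "a^4 \<le> D1 * D2" .
    have a4: "0 < a^4" using a by simp
    have "inverse D1 - inverse D2 = (D2 - D1) / (D1 * D2)" using D1p D2p by (simp add: field_simps)
    then have "\<bar>inverse D1 - inverse D2\<bar> = \<bar>D2 - D1\<bar> / (D1 * D2)" using D1p D2p by (simp add: abs_divide abs_mult)
    also have "D2 - D1 = (y2 - y1) * (y1 + y2)" unfolding D1_def D2_def by (simp add: power2_eq_square algebra_simps)
    then have "\<bar>D2 - D1\<bar> = \<bar>y1 - y2\<bar> * (y1 + y2)" using p1 p2 by (simp add: abs_mult abs_minus_commute)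
    also have "\<bar>y1 - y2\<bar> * (y1 + y2) / (D1 * D2) \<le> \<bar>y1 - y2\<bar> * (2 * b) / a^4"
      using y1 y2 a4 aD a by (intro frac_le mult_left_mono) auto
    finally have "\<bar>inverse D1 - inverse D2\<bar> \<le> ?L" by (simp add: mult.commute)
    then have "W t * \<bar>inverse D1 - inverse D2\<bar> \<le> W t * ?L" by (rule mult_left_mono[OF _ W_nonneg])
    then show ?thesis unfolding D1_def D2_def by (simp add: right_diff_distrib[symmetric] abs_mult W_nonneg)
  qed
  have "\<bar>Fk k x y1 - Fk k x y2\<bar> = \<bar>integral\<^sup>L lborel (\<lambda>t. W t * inverse ((x - t)^2 + y1^2) - W t * inverse ((x - t)^2 + y2^2))\<bar>"
    unfolding F_eq using F_int[OF p1] F_int[OF p2] by simp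
  also have "\<dots> \<le> integral\<^sup>L lborel (\<lambda>t. W t * ?L)"
    by (rule integral_abs_bound_integral) (use F_int[OF p1] F_int[OF p2] W_int pw in auto)
  also have "\<dots> = M * ?L" by (simp add: M_def)
  finally show ?thesis by (simp add: mult.assoc)
qed

lemma F_cont: assumes a: "0 < a" and ab: "a \<le> b" shows "continuous_on {a..b} (Fk k x)"
proof (rule lipschitz_on_continuous_on)
  show "lipschitz_on (M * (2 * b / a^4) + 0) {a..b} (Fk k x)"
    unfolding lipschitz_on_def dist_real_def
  proof
    show "0 \<le> M * (2 * b / a^4) + 0" using a ab M_nonneg by simp
  qed (use F_lip[OF a] in auto)
qed

end

context kern begin

lemma F_lower_int:
  assumes y: "0 < y" and ab: "a \<le> b" and kap: "\<And>t. t \<in> {a..b} \<Longrightarrow> \<kappa> \<le> W t * inverse ((x - t)^2 + y^2)"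
    and k0: "0 \<le> \<kappa>"
  shows "\<kappa> * (b - a) \<le> Fk k x y"
proof -
  have "\<kappa> * (b - a) = integral\<^sup>L lborel (\<lambda>t. indicator {a..b} t * \<kappa>)"
    using ab by (simp add: measure_lborel_Icc mult.commute)
  also have "\<dots> \<le> Fk k x y" unfolding F_eq
  proof (rule integral_mono[OF _ F_int[OF y]])
    show "integrable lborel (\<lambda>t. indicator {a..b} t * \<kappa>)"
      by (intro integrable_mult_left integrable_real_indicator) (use ab in auto)
    show "indicator {a..b} t * \<kappa> \<le> W t * inverse ((x - t)^2 + y^2)" for t
      using kap[of t] k0 D_pos[OF y, of x t] by (cases "t \<in> {a..b}") (auto intro!: mult_nonneg_nonneg W_nonneg)
  qed
  finally show ?thesis .
qed

lemma F_big: "\<exists>y>0. Fk k x y > 1"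
proof (cases "x = 0")
  case False
  define \<kappa> where "\<kappa> = \<bar>x\<bar> * k x / 2"
  have kp: "0 < \<kappa>" using kpos[OF False] False by (simp add: \<kappa>_def)
  define y where "y = min (\<bar>x\<bar> / 2) (\<kappa> / 4)"
  have y: "0 < y" using kp False by (simp add: y_def)
  have yx: "y \<le> \<bar>x\<bar> / 2" and yk: "y \<le> \<kappa> / 4" by (auto simp: y_def)
  define a where "a = (if x > 0 then x - y else x)"
  have W1: "\<kappa> \<le> W t" if "t \<in> {a..a+y}" for t
  proof (cases "x > 0")
    case True
    then have t: "x / 2 \<le> t" "t \<le> x" using that yx by (auto simp: a_def)
    have "k x \<le> k t" using monotone_onD[OF decr, of t x] t True by simp
    have "\<bar>x\<bar> / 2 * k x \<le> \<bar>t\<bar> * k t"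
      by (rule mult_mono) (use t True kpos[OF False] \<open>k x \<le> k t\<close> in auto)
    then show ?thesis unfolding \<kappa>_def W_def by simp
  next
    case f: False
    then have xn: "x < 0" using False by simp
    then have t: "x \<le> t" "t \<le> x / 2" using that yx by (auto simp: a_def)
    have "k x \<le> k t" using monotone_onD[OF incr, of x t] t xn by simp
    have "\<bar>x\<bar> / 2 * k x \<le> \<bar>t\<bar> * k t"
      by (rule mult_mono) (use t xn kpos[OF False] \<open>k x \<le> k t\<close> in auto)
    then show ?thesis unfolding \<kappa>_def W_def by simp
  qed
  have Dle: "(x - t)^2 + y^2 \<le> 2 * y^2" if "t \<in> {a..a+y}" for t
  proof -
    have "\<bar>x - t\<bar> \<le> y" using that by (auto simp: a_def split: if_splits)
    then have "\<bar>x - t\<bar>^2 \<le> y^2" by (rule power_mono) simp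
    then have "(x - t)^2 \<le> y^2" by simp
    then show ?thesis by simp
  qed
  have kap: "\<kappa> / (2 * y^2) \<le> W t * inverse ((x - t)^2 + y^2)" if "t \<in> {a..a+y}" for t
  proof -
    have "\<kappa> / (2 * y^2) \<le> W t / ((x - t)^2 + y^2)"
      by (rule frac_le[OF W_nonneg W1[OF that] D_pos[OF y, of x t] Dle[OF that]])
    then show ?thesis by (simp only: divide_inverse)
  qed
  have "\<kappa> / (2 * y^2) * (a + y - a) \<le> Fk k x y"
    by (rule F_lower_int[OF y _ kap]) (use y kp in auto)
  moreover have "\<kappa> / (2 * y^2) * (a + y - a) = \<kappa> / (2 * y)" using y by (simp add: power2_eq_square)
  moreover have "\<kappa> / (2 * y) \<ge> 2" using yk y by (simp add: field_simps)
  ultimately show ?thesis using y by (intro exI[of _ y]) auto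
next
  case True
  define k1 where "k1 = k 1"
  have k1: "0 < k1" using kpos[of 1] by (simp add: k1_def)
  define y where "y = exp (- 2 / k1)"
  have y: "0 < y" by (simp add: y_def)
  let ?g = "\<lambda>t. k1 * (t / (t^2 + y^2))"
  have yy: "0 < y^2" using y by simp
  have cont: "continuous_on {0..1} ?g" using yy
    by (intro continuous_intros) (auto simp: add_nonneg_pos)
  have deriv: "((\<lambda>t. k1 * (ln (t^2 + y^2) / 2)) has_vector_derivative ?g t) (at t within {0..1})" if "t \<in> {0..1}" for t
  proof -
    have "0 < t^2 + y^2" using yy by (simp add: add_nonneg_pos)
    then have d0: "DERIV ln (t^2 + y^2) :> inverse (t^2 + y^2)" by (rule DERIV_ln)
    have d1: "((\<lambda>t. t^2 + y^2) has_real_derivative 2 * t) (at t within {0..1})"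
      by (auto intro!: derivative_eq_intros)
    have d2: "((\<lambda>t. ln (t^2 + y^2)) has_real_derivative inverse (t^2 + y^2) * (2 * t)) (at t within {0..1})"
      by (rule DERIV_chain2[OF d0 d1])
    have d3: "((\<lambda>t. k1 * (ln (t^2 + y^2) / 2)) has_real_derivative k1 * (inverse (t^2 + y^2) * (2 * t) / 2)) (at t within {0..1})"
      by (intro DERIV_cmult DERIV_cdivide d2)
    moreover have "k1 * (inverse (t^2 + y^2) * (2 * t) / 2) = ?g t"
    proof -
      have "inverse (t^2 + y^2) * (2 * t) / 2 = t * inverse (t^2 + y^2)" by simp
      then show ?thesis by (simp only: divide_inverse)
    qed
    ultimately show ?thesis by (simp add: has_real_derivative_iff_has_vector_derivative)
  qed
  have hi: "(?g has_integral (k1 * (ln (1 + y^2) / 2) - k1 * (ln (0^2 + y^2) / 2))) {0..1}"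
    using fundamental_theorem_of_calculus[OF _ deriv] by simp
  have si: "set_integrable lborel {0..1} ?g" by (rule borel_integrable_atLeastAtMost'[OF cont])
  have "integral\<^sup>L lborel (\<lambda>t. indicator {0..1} t * ?g t) = integral {0..1} ?g"
    using set_borel_integral_eq_integral(2)[OF si] by (simp add: set_lebesgue_integral_def)
  also have "\<dots> = k1 * (ln (1 + y^2) / 2) - k1 * (ln (y^2) / 2)" using integral_unique[OF hi] by simp
  also have "\<dots> \<ge> k1 * (- ln (y^2) / 2)"
  proof -
    have "0 \<le> ln (1 + y^2)" by simp
    then show ?thesis using k1 by (simp add: field_simps)
  qed
  moreover have "ln (y^2) = - 4 / k1" using y by (simp add: ln_realpow y_def)
  moreover have "k1 * (- (- 4 / k1) / 2) = 2" using k1 by simp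
  ultimately have I1: "integral\<^sup>L lborel (\<lambda>t. indicator {0..1} t * ?g t) \<ge> 2" by simp
  have "integral\<^sup>L lborel (\<lambda>t. indicator {0..1} t * ?g t) \<le> Fk k x y" unfolding F_eq
  proof (rule integral_mono[OF _ F_int[OF y]])
    show "integrable lborel (\<lambda>t. indicator {0..1} t * ?g t)" using si by (simp add: set_integrable_def)
    show "indicator {0..1} t * ?g t \<le> W t * inverse ((x - t)^2 + y^2)" for t
    proof (cases "t \<in> {0<..1}")
      case True
      then have "k1 \<le> k t" using monotone_onD[OF decr, of t 1] by (simp add: k1_def)
      then have "k1 * t \<le> W t" using True by (simp add: W_def mult.commute mult_right_mono)
      then have "(k1 * t) * inverse (t^2 + y^2) \<le> W t * inverse (t^2 + y^2)"
        by (rule mult_right_mono) simp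
      then show ?thesis using True \<open>x = 0\<close> by (simp add: divide_inverse mult.assoc)
    next
      case False
      then show ?thesis using D_pos[OF y, of x t]
        by (cases "t = 0") (auto intro!: mult_nonneg_nonneg W_nonneg)
    qed
  qed
  then show ?thesis using I1 y by (intro exI[of _ y]) auto
qed

end

lemma re_pt: assumes "0 < (y::real)"
  shows "Re (Complex x y * (complex_of_real s / (Complex x y - complex_of_real t))) = s + t * s * ((x - t) * inverse ((x - t)^2 + y^2))"
proof -
  have D: "(x-t)^2 + y^2 \<noteq> 0" using assms by (simp add: add_nonneg_eq_0_iff)
  have e: "Complex x y - complex_of_real t = Complex (x - t) y" by (simp add: complex_eq_iff)
  have r: "Re (Complex x y * (complex_of_real s / Complex (x - t) y)) = (x * (s * (x - t)) + y * (s * y)) / ((x-t)^2 + y^2)"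
    by (simp add: Re_divide Im_divide add_divide_distrib)
  show ?thesis unfolding e r using D by (simp add: field_simps power2_eq_square)
qed

context kern begin

lemma v_ex1: "\<exists>!y. 0 < y \<and> Fk k x y = 1"
proof -
  obtain y0 where y0: "0 < y0" "Fk k x y0 > 1" using F_big by blast
  define y1 where "y1 = y0 + M + 1"
  have y1ge: "1 \<le> y1" "y0 \<le> y1" "M < y1" using M_nonneg y0 by (auto simp: y1_def)
  have h: "y1 * 1 \<le> y1 * y1" using y1ge by (intro mult_left_mono) auto
  have "M < y1^2" using h y1ge unfolding power2_eq_square by linarith
  then have m: "M / y1^2 < 1" using y1ge by simp
  have "Fk k x y1 \<le> M / y1^2" by (rule F_le) (use y1ge in linarith)
  then have F1: "Fk k x y1 \<le> 1" using m by linarith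
  obtain y where y: "y0 \<le> y" "y \<le> y1" "Fk k x y = 1"
    using IVT2'[of "Fk k x" y1 1 y0, OF F1 _ y1ge(2) F_cont[OF y0(1) y1ge(2)]] y0 by auto
  show ?thesis
  proof (rule ex1I[of _ y])
    show "0 < y \<and> Fk k x y = 1" using y y0 by simp
    fix y' assume y': "0 < y' \<and> Fk k x y' = 1"
    show "y' = y"
    proof (rule linorder_cases[of y' y])
      assume "y' < y" then have "Fk k x y < Fk k x y'" using F_strict y' by blast
      then show ?thesis using y y' by simp
    next
      assume yy': "y < y'"
      have "0 < y" using y y0 by linarith
      then have "Fk k x y' < Fk k x y" using F_strict yy' by blast
      then show ?thesis using y y' by simp
    qed
  qed
qed

lemma v_pos: "0 < vk k x" and v_F: "Fk k x (vk k x) = 1"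
  using theI'[OF v_ex1[of x]] unfolding vk_def by auto

lemma v_sq: "(vk k x)^2 \<le> M"
proof -
  have "1 \<le> M / (vk k x)^2" using F_le[OF v_pos[of x], of x] v_F[of x] by simp
  then show ?thesis using v_pos[of x] by (simp add: le_divide_eq)
qed

definition G where "G x y = integral\<^sup>L lborel (\<lambda>t. W t * ((x - t) * inverse ((x - t)^2 + y^2)))"
definition c0 where "c0 = integral\<^sup>L lborel (ktilde k)"

lemma pG: assumes "0 < (y::real)" shows "\<bar>(x - t) * inverse ((x - t)^2 + y^2)\<bar> \<le> inverse ((x - t)^2 + y^2) + 1"
proof -
  have Dp: "0 < (x - t)^2 + y^2" by (rule D_pos[OF assms])
  have a: "\<bar>x - t\<bar> \<le> 1 + (x - t)^2"
  proof (cases "\<bar>x - t\<bar> \<le> 1")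
    case True
    have "1 \<le> 1 + (x - t)^2" by simp
    then show ?thesis using True by linarith
  next
    case False
    then have "\<bar>x - t\<bar> * 1 \<le> \<bar>x - t\<bar> * \<bar>x - t\<bar>" by (intro mult_left_mono) auto
    then show ?thesis by (simp add: power2_eq_square abs_mult_self_eq)
  qed
  also have "\<dots> \<le> 1 + ((x - t)^2 + y^2)" by simp
  finally have "\<bar>x - t\<bar> * inverse ((x - t)^2 + y^2) \<le> (1 + ((x - t)^2 + y^2)) * inverse ((x - t)^2 + y^2)"
    by (rule mult_right_mono) (use Dp in simp)
  also have "\<dots> = inverse ((x - t)^2 + y^2) + 1"
  proof -
    have g: "\<And>D::real. 0 < D \<Longrightarrow> (1 + D) * inverse D = inverse D + 1" by (simp add: distrib_right)
    show ?thesis by (rule g[OF Dp])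
  qed
  finally show ?thesis using Dp by (simp add: abs_mult)
qed

lemma G_int: assumes "0 < y" shows "integrable lborel (\<lambda>t. W t * ((x - t) * inverse ((x - t)^2 + y^2)))"
proof (rule intW)
  show "\<bar>(x - t) * inverse ((x - t)^2 + y^2)\<bar> \<le> inverse (y^2) + 1" for t
    using pG[OF assms, of x t] abs_le_D1[OF inv_D_le[OF assms, of x t]] by linarith
qed measurable

lemma G_bound: assumes y: "0 < y" shows "\<bar>G x y\<bar> \<le> Fk k x y + M"
proof -
  have "\<bar>G x y\<bar> \<le> integral\<^sup>L lborel (\<lambda>t. W t * inverse ((x - t)^2 + y^2) + W t)"
    unfolding G_def
  proof (rule integral_abs_bound_integral[OF G_int[OF y]])
    show "integrable lborel (\<lambda>t. W t * inverse ((x - t)^2 + y^2) + W t)"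
      using F_int[OF y] W_int by auto
    fix t
    have "\<bar>W t * ((x - t) * inverse ((x - t)^2 + y^2))\<bar> = W t * \<bar>(x - t) * inverse ((x - t)^2 + y^2)\<bar>"
      by (simp add: abs_mult W_nonneg)
    also have "\<dots> \<le> W t * (inverse ((x - t)^2 + y^2) + 1)" by (rule mult_left_mono[OF pG[OF y] W_nonneg])
    finally show "\<bar>W t * ((x - t) * inverse ((x - t)^2 + y^2))\<bar> \<le> W t * inverse ((x - t)^2 + y^2) + W t"
      by (simp add: distrib_left)
  qed
  also have "\<dots> = Fk k x y + M" unfolding F_eq M_def using F_int[OF y] W_int by simp
  finally show ?thesis .
qed

lemma W_kt: "W t = t * ktilde k t" by (simp add: W_def ktilde_def abs_sgn mult.assoc)

lemma Re_H: assumes y: "0 < y" shows "Re (Hk k (Complex x y)) = x + c0 + G x y"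
proof -
  define z where "z = Complex x y"
  define f where "f t = complex_of_real (ktilde k t) / (z - complex_of_real t)" for t
  have fm[measurable]: "f \<in> borel_measurable lborel" unfolding f_def[abs_def] by measurable
  have fi: "integrable lborel f"
  proof (rule Bochner_Integration.integrable_bound[OF integrable_divide[OF kt_int, of y] fm])
    show "AE t in lborel. norm (f t) \<le> norm (ktilde k t / y)"
    proof (rule AE_I2)
      fix t
      have "y \<le> cmod (z - complex_of_real t)"
        using abs_Im_le_cmod[of "z - complex_of_real t"] y by (simp add: z_def)
      moreover have "0 < cmod (z - complex_of_real t)" using calculation y by linarith
      ultimately have "\<bar>ktilde k t\<bar> / cmod (z - complex_of_real t) \<le> \<bar>ktilde k t\<bar> / y"
        using y by (intro divide_left_mono) auto
      then show "norm (f t) \<le> norm (ktilde k t / y)" using y by (simp add: f_def norm_divide)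
    qed
  qed
  have zfi: "integrable lborel (\<lambda>t. z * f t)" by (rule integrable_mult_right[OF fi])
  have "Re (Hk k z) = x + Re (z * integral\<^sup>L lborel f)" unfolding Hk_def f_def by (simp add: z_def)
  also have "z * integral\<^sup>L lborel f = integral\<^sup>L lborel (\<lambda>t. z * f t)" by simp
  also have "Re (integral\<^sup>L lborel (\<lambda>t. z * f t)) = integral\<^sup>L lborel (\<lambda>t. Re (z * f t))"
    using integral_Re[OF zfi] by simp
  also have "\<dots> = integral\<^sup>L lborel (\<lambda>t. ktilde k t + W t * ((x - t) * inverse ((x - t)^2 + y^2)))"
  proof (rule Bochner_Integration.integral_cong[OF refl])
    fix t
    show "Re (z * f t) = ktilde k t + W t * ((x - t) * inverse ((x - t)^2 + y^2))"
      unfolding f_def z_def re_pt[OF y] W_kt by simp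
  qed
  also have "\<dots> = c0 + G x y" unfolding c0_def G_def using kt_int G_int[OF y] by simp
  finally show ?thesis by (simp add: z_def)
qed

lemma P_eq: "Pk k x = x + c0 + G x (vk k x)"
  unfolding Pk_def by (rule Re_H[OF v_pos])

lemma P_near: "\<bar>Pk k x - x\<bar> \<le> \<bar>c0\<bar> + 1 + M"
  using G_bound[OF v_pos, of x x] v_F[of x] unfolding P_eq by linarith

end

lemma gdiv1: "(E::real) \<noteq> 0 \<Longrightarrow> - (a * (b / E) - c * (d / E)) = - (a * b - c * d) / E"
  by (simp add: field_simps)
lemma gdiv2: "(E::real) \<noteq> 0 \<Longrightarrow> - (a * (b / E) + c * (d / E)) = - (a * b + c * d) / E"
  by (simp add: field_simps)
lemma glin: "(c::real) \<le> a + b \<Longrightarrow> 2 * a \<le> P \<Longrightarrow> 2 * b \<le> Q \<Longrightarrow> c \<le> (P + Q) / 2" by (simp add: field_simps)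
lemma g3: "2 * (Z::real) / 2 / E = Z / E" by simp
lemma g4: assumes "0 < (E::real)" "2 * \<bar>n\<bar> \<le> S" shows "\<bar>n / E\<bar> \<le> S / 2 / E"
proof -
  have "\<bar>n\<bar> \<le> S / 2" using assms(2) by simp
  then have "\<bar>n\<bar> / E \<le> S / 2 / E" using assms(1) by (rule divide_right_mono[OF _ less_imp_le])
  then show ?thesis using assms(1) by (simp add: abs_divide)
qed

lemma id1:
  fixes p q y1 y2 D1 D2 :: real
  assumes d1: "D1 = p^2 + y1^2" and d2: "D2 = q^2 + y2^2" and n: "D1 \<noteq> 0" "D2 \<noteq> 0"
  shows "p * inverse D1 - q * inverse D2 =
     - ((p - q) * ((p*q - y1*y2) / (D1 * D2)) - (y1 - y2) * (- (p*y2 + q*y1) / (D1 * D2)))"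
proof -
  have "p * inverse D1 - q * inverse D2 = (p * D2 - q * D1) / (D1 * D2)" using n by (simp add: field_simps)
  also have "p * D2 - q * D1 = - ((p - q) * (p*q - y1*y2) - (y1 - y2) * (- (p*y2 + q*y1)))"
    unfolding d1 d2 by (simp add: algebra_simps power2_eq_square)
  also have "\<dots> / (D1 * D2) = - ((p - q) * ((p*q - y1*y2) / (D1 * D2)) - (y1 - y2) * (- (p*y2 + q*y1) / (D1 * D2)))"
    by (rule gdiv1[symmetric]) (use n in simp)
  finally show ?thesis .
qed
lemma id2:
  fixes p q y1 y2 D1 D2 :: real
  assumes d1: "D1 = p^2 + y1^2" and d2: "D2 = q^2 + y2^2" and n: "D1 \<noteq> 0" "D2 \<noteq> 0"
  shows "- y1 * inverse D1 + y2 * inverse D2 =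
     - ((p - q) * (- (p*y2 + q*y1) / (D1 * D2)) + (y1 - y2) * ((p*q - y1*y2) / (D1 * D2)))"
proof -
  have "- y1 * inverse D1 + y2 * inverse D2 = (- y1 * D2 + y2 * D1) / (D1 * D2)" using n by (simp add: field_simps)
  also have "- y1 * D2 + y2 * D1 = - ((p - q) * (- (p*y2 + q*y1)) + (y1 - y2) * (p*q - y1*y2))"
    unfolding d1 d2 by (simp add: algebra_simps power2_eq_square)
  also have "\<dots> / (D1 * D2) = - ((p - q) * (- (p*y2 + q*y1) / (D1 * D2)) + (y1 - y2) * ((p*q - y1*y2) / (D1 * D2)))"
    by (rule gdiv2[symmetric]) (use n in simp)
  finally show ?thesis .
qed
lemma id3:
  fixes p q y1 y2 D1 D2 :: real
  assumes d1: "D1 = p^2 + y1^2" and d2: "D2 = q^2 + y2^2" and n: "D1 \<noteq> 0" "D2 \<noteq> 0"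
  shows "(p*q - y1*y2) / (D1 * D2) =
     (inverse D1 + inverse D2) / 2 - ((p - q)^2 + (y1 + y2)^2) / 2 * inverse (D1 * D2)"
proof -
  have "(inverse D1 + inverse D2) / 2 - ((p - q)^2 + (y1 + y2)^2) / 2 * inverse (D1 * D2)
      = ((D2 + D1) - ((p - q)^2 + (y1 + y2)^2)) / 2 / (D1 * D2)" using n by (simp add: field_simps)
  also have "(D2 + D1) - ((p - q)^2 + (y1 + y2)^2) = 2 * (p*q - y1*y2)"
    unfolding d1 d2 by (simp add: algebra_simps power2_eq_square)
  also have "2 * (p*q - y1*y2) / 2 / (D1 * D2) = (p*q - y1*y2) / (D1 * D2)" by (rule g3)
  finally show ?thesis by (rule sym)
qed
lemma bd:
  fixes p q y1 y2 D1 D2 :: real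
  assumes d1: "D1 = p^2 + y1^2" and d2: "D2 = q^2 + y2^2" and n: "0 < D1" "0 < D2"
  shows "\<bar>(p*q - y1*y2) / (D1 * D2)\<bar> \<le> (inverse D1 + inverse D2) / 2"
    and "\<bar>- (p*y2 + q*y1) / (D1 * D2)\<bar> \<le> (inverse D1 + inverse D2) / 2"
proof -
  have e: "(inverse D1 + inverse D2) / 2 = (D1 + D2) / 2 / (D1 * D2)"
    using n by (simp add: field_simps)
  have pp: "0 < D1 * D2" using n by simp
  have a1: "2 * \<bar>p*q\<bar> \<le> p^2 + q^2" using sum_squares_bound[of "\<bar>p\<bar>" "\<bar>q\<bar>"] by (simp add: abs_mult)
  have a2: "2 * \<bar>y1*y2\<bar> \<le> y1^2 + y2^2" using sum_squares_bound[of "\<bar>y1\<bar>" "\<bar>y2\<bar>"] by (simp add: abs_mult)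
  have a3: "2 * \<bar>p*y2\<bar> \<le> p^2 + y2^2" using sum_squares_bound[of "\<bar>p\<bar>" "\<bar>y2\<bar>"] by (simp add: abs_mult)
  have a4: "2 * \<bar>q*y1\<bar> \<le> q^2 + y1^2" using sum_squares_bound[of "\<bar>q\<bar>" "\<bar>y1\<bar>"] by (simp add: abs_mult)
  have s: "D1 + D2 = (p^2 + q^2) + (y1^2 + y2^2)" "D1 + D2 = (p^2 + y2^2) + (q^2 + y1^2)"
    unfolding d1 d2 by simp_all
  have "\<bar>p*q - y1*y2\<bar> \<le> (D1 + D2) / 2" unfolding s(1) by (rule glin[OF abs_triangle_ineq4 a1 a2])
  then show "\<bar>(p*q - y1*y2) / (D1 * D2)\<bar> \<le> (inverse D1 + inverse D2) / 2"
    unfolding e by (intro g4[OF pp]) simp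
  have "\<bar>- (p*y2 + q*y1)\<bar> \<le> (D1 + D2) / 2" unfolding s(2) abs_minus_cancel by (rule glin[OF abs_triangle_ineq a3 a4])
  then show "\<bar>- (p*y2 + q*y1) / (D1 * D2)\<bar> \<le> (inverse D1 + inverse D2) / 2"
    unfolding e by (intro g4[OF pp]) simp
qed

lemma alg1: fixes dx dy AI AR R y1 y2 :: real
  assumes b: "- y1 + y2 = - (dx * AI + dy * AR)" and dy: "dy = y1 - y2" and R: "R = 1 - AR"
  shows "dy * R = dx * AI"
  using b unfolding dy R by (simp add: algebra_simps)

lemma alg2: fixes dx dy AI AR R Pd :: real
  assumes P: "Pd = dx - (dx * AR - dy * AI)" and R: "R = 1 - AR" and c: "dy * R = dx * AI"
  shows "Pd * R = dx * (R^2 + AI^2)"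
proof -
  have "Pd = dx * R + dy * AI" unfolding P R by (simp add: algebra_simps)
  then have "Pd * R = dx * R * R + (dy * R) * AI" by (simp add: algebra_simps)
  also have "\<dots> = dx * (R^2 + AI^2)" unfolding c by (simp add: algebra_simps power2_eq_square)
  finally show ?thesis .
qed

context kern begin

definition aR :: "real \<Rightarrow> real \<Rightarrow> real \<Rightarrow> real \<Rightarrow> real \<Rightarrow> real" where "aR x1 y1 x2 y2 t = ((x1 - t) * (x2 - t) - y1 * y2) / (((x1 - t)^2 + y1^2) * ((x2 - t)^2 + y2^2))"
definition aI :: "real \<Rightarrow> real \<Rightarrow> real \<Rightarrow> real \<Rightarrow> real \<Rightarrow> real" where "aI x1 y1 x2 y2 t = - ((x1 - t) * y2 + (x2 - t) * y1) / (((x1 - t)^2 + y1^2) * ((x2 - t)^2 + y2^2))"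
definition kK :: "real \<Rightarrow> real \<Rightarrow> real \<Rightarrow> real \<Rightarrow> real \<Rightarrow> real" where "kK x1 y1 x2 y2 t = inverse (((x1 - t)^2 + y1^2) * ((x2 - t)^2 + y2^2))"

lemma aR_bd: assumes "0 < y1" "0 < y2"
  shows "\<bar>aR x1 y1 x2 y2 t\<bar> \<le> (inverse ((x1 - t)^2 + y1^2) + inverse ((x2 - t)^2 + y2^2)) / 2"
  unfolding aR_def by (rule bd(1)[OF refl refl D_pos[OF assms(1)] D_pos[OF assms(2)]])

lemma aI_bd: assumes "0 < y1" "0 < y2"
  shows "\<bar>aI x1 y1 x2 y2 t\<bar> \<le> (inverse ((x1 - t)^2 + y1^2) + inverse ((x2 - t)^2 + y2^2)) / 2"
  unfolding aI_def by (rule bd(2)[OF refl refl D_pos[OF assms(1)] D_pos[OF assms(2)]])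

lemma half_bd: assumes "0 < (y1::real)" "0 < y2"
  shows "(inverse ((x1 - t)^2 + y1^2) + inverse ((x2 - t)^2 + y2^2)) / 2 \<le> (inverse (y1^2) + inverse (y2^2)) / 2"
  using abs_le_D1[OF inv_D_le[OF assms(1), of x1 t]] abs_le_D1[OF inv_D_le[OF assms(2), of x2 t]] by simp

lemma aR_int: assumes "0 < y1" "0 < y2" shows "integrable lborel (\<lambda>t. W t * aR x1 y1 x2 y2 t)"
  by (rule intW[OF _ order.trans[OF aR_bd[OF assms] half_bd[OF assms]]]) (unfold aR_def, measurable)

lemma aI_int: assumes "0 < y1" "0 < y2" shows "integrable lborel (\<lambda>t. W t * aI x1 y1 x2 y2 t)"
  by (rule intW[OF _ order.trans[OF aI_bd[OF assms] half_bd[OF assms]]]) (unfold aI_def, measurable)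

lemma kK_int: assumes "0 < y1" "0 < y2" shows "integrable lborel (\<lambda>t. W t * kK x1 y1 x2 y2 t)"
proof (rule intW)
  fix t
  have "\<bar>kK x1 y1 x2 y2 t\<bar> = \<bar>inverse ((x1 - t)^2 + y1^2)\<bar> * \<bar>inverse ((x2 - t)^2 + y2^2)\<bar>"
    by (simp add: kK_def abs_mult inverse_mult_distrib)
  also have "\<dots> \<le> inverse (y1^2) * inverse (y2^2)"
    by (rule mult_mono[OF inv_D_le[OF assms(1)] inv_D_le[OF assms(2)]]) auto
  finally show "\<bar>kK x1 y1 x2 y2 t\<bar> \<le> inverse (y1^2) * inverse (y2^2)" .
qed (unfold kK_def, measurable)


lemma int_id1: assumes y1: "0 < y1" and y2: "0 < y2"
  shows "G x1 y1 - G x2 y2 = - ((x1 - x2) * integral\<^sup>L lborel (\<lambda>t. W t * aR x1 y1 x2 y2 t)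
                              - (y1 - y2) * integral\<^sup>L lborel (\<lambda>t. W t * aI x1 y1 x2 y2 t))"
proof -
  have pw: "W t * ((x1 - t) * inverse ((x1 - t)^2 + y1^2)) - W t * ((x2 - t) * inverse ((x2 - t)^2 + y2^2))
      = - ((x1 - x2) * (W t * aR x1 y1 x2 y2 t) - (y1 - y2) * (W t * aI x1 y1 x2 y2 t))" for t
  proof -
    have e: "(x1 - t) * inverse ((x1 - t)^2 + y1^2) - (x2 - t) * inverse ((x2 - t)^2 + y2^2)
        = - (((x1 - t) - (x2 - t)) * aR x1 y1 x2 y2 t - (y1 - y2) * aI x1 y1 x2 y2 t)"
      unfolding aR_def aI_def
      by (rule id1[OF refl refl]) (use D_pos[OF y1, of x1 t] D_pos[OF y2, of x2 t] in auto)
    have "W t * ((x1 - t) * inverse ((x1 - t)^2 + y1^2)) - W t * ((x2 - t) * inverse ((x2 - t)^2 + y2^2))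
        = W t * ((x1 - t) * inverse ((x1 - t)^2 + y1^2) - (x2 - t) * inverse ((x2 - t)^2 + y2^2))"
      by (simp add: right_diff_distrib)
    also have "\<dots> = W t * (- ((x1 - x2) * aR x1 y1 x2 y2 t - (y1 - y2) * aI x1 y1 x2 y2 t))"
      unfolding e by simp
    also have "\<dots> = - ((x1 - x2) * (W t * aR x1 y1 x2 y2 t) - (y1 - y2) * (W t * aI x1 y1 x2 y2 t))"
      by (simp add: algebra_simps)
    finally show ?thesis .
  qed
  have "G x1 y1 - G x2 y2 = integral\<^sup>L lborel (\<lambda>t. W t * ((x1 - t) * inverse ((x1 - t)^2 + y1^2)) - W t * ((x2 - t) * inverse ((x2 - t)^2 + y2^2)))"
    unfolding G_def by (rule Bochner_Integration.integral_diff[symmetric, OF G_int[OF y1] G_int[OF y2]])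
  also have "\<dots> = integral\<^sup>L lborel (\<lambda>t. - ((x1 - x2) * (W t * aR x1 y1 x2 y2 t) - (y1 - y2) * (W t * aI x1 y1 x2 y2 t)))"
    by (rule Bochner_Integration.integral_cong[OF refl pw])
  also have "\<dots> = - ((x1 - x2) * integral\<^sup>L lborel (\<lambda>t. W t * aR x1 y1 x2 y2 t)
                              - (y1 - y2) * integral\<^sup>L lborel (\<lambda>t. W t * aI x1 y1 x2 y2 t))"
    using aR_int[OF y1 y2, of x1 x2] aI_int[OF y1 y2, of x1 x2] by simp
  finally show ?thesis .
qed

lemma int_id2: assumes y1: "0 < y1" and y2: "0 < y2"
  shows "- y1 * Fk k x1 y1 + y2 * Fk k x2 y2 = - ((x1 - x2) * integral\<^sup>L lborel (\<lambda>t. W t * aI x1 y1 x2 y2 t)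
                              + (y1 - y2) * integral\<^sup>L lborel (\<lambda>t. W t * aR x1 y1 x2 y2 t))"
proof -
  have pw: "- y1 * (W t * inverse ((x1 - t)^2 + y1^2)) + y2 * (W t * inverse ((x2 - t)^2 + y2^2))
      = - ((x1 - x2) * (W t * aI x1 y1 x2 y2 t) + (y1 - y2) * (W t * aR x1 y1 x2 y2 t))" for t
  proof -
    have e: "- y1 * inverse ((x1 - t)^2 + y1^2) + y2 * inverse ((x2 - t)^2 + y2^2)
        = - (((x1 - t) - (x2 - t)) * aI x1 y1 x2 y2 t + (y1 - y2) * aR x1 y1 x2 y2 t)"
      unfolding aR_def aI_def
      by (rule id2[OF refl refl]) (use D_pos[OF y1, of x1 t] D_pos[OF y2, of x2 t] in auto)
    have "- y1 * (W t * inverse ((x1 - t)^2 + y1^2)) + y2 * (W t * inverse ((x2 - t)^2 + y2^2))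
        = W t * (- y1 * inverse ((x1 - t)^2 + y1^2) + y2 * inverse ((x2 - t)^2 + y2^2))"
      by (simp add: algebra_simps)
    also have "\<dots> = W t * (- ((x1 - x2) * aI x1 y1 x2 y2 t + (y1 - y2) * aR x1 y1 x2 y2 t))"
      unfolding e by simp
    also have "\<dots> = - ((x1 - x2) * (W t * aI x1 y1 x2 y2 t) + (y1 - y2) * (W t * aR x1 y1 x2 y2 t))"
      by (simp add: algebra_simps)
    finally show ?thesis .
  qed
  have "- y1 * Fk k x1 y1 + y2 * Fk k x2 y2 = integral\<^sup>L lborel (\<lambda>t. - y1 * (W t * inverse ((x1 - t)^2 + y1^2)) + y2 * (W t * inverse ((x2 - t)^2 + y2^2)))"
    unfolding F_eq using F_int[OF y1, of x1] F_int[OF y2, of x2] by simp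
  also have "\<dots> = integral\<^sup>L lborel (\<lambda>t. - ((x1 - x2) * (W t * aI x1 y1 x2 y2 t) + (y1 - y2) * (W t * aR x1 y1 x2 y2 t)))"
    by (rule Bochner_Integration.integral_cong[OF refl pw])
  also have "\<dots> = - ((x1 - x2) * integral\<^sup>L lborel (\<lambda>t. W t * aI x1 y1 x2 y2 t)
                              + (y1 - y2) * integral\<^sup>L lborel (\<lambda>t. W t * aR x1 y1 x2 y2 t))"
    using aR_int[OF y1 y2, of x1 x2] aI_int[OF y1 y2, of x1 x2] by simp
  finally show ?thesis .
qed

lemma int_id3: assumes y1: "0 < y1" and y2: "0 < y2"
  shows "integral\<^sup>L lborel (\<lambda>t. W t * aR x1 y1 x2 y2 t) = (Fk k x1 y1 + Fk k x2 y2) / 2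
     - ((x1 - x2)^2 + (y1 + y2)^2) / 2 * integral\<^sup>L lborel (\<lambda>t. W t * kK x1 y1 x2 y2 t)"
proof -
  have pw: "W t * aR x1 y1 x2 y2 t = (W t * inverse ((x1 - t)^2 + y1^2) + W t * inverse ((x2 - t)^2 + y2^2)) / 2
      - ((x1 - x2)^2 + (y1 + y2)^2) / 2 * (W t * kK x1 y1 x2 y2 t)" for t
  proof -
    have e: "aR x1 y1 x2 y2 t = (inverse ((x1 - t)^2 + y1^2) + inverse ((x2 - t)^2 + y2^2)) / 2
       - (((x1 - t) - (x2 - t))^2 + (y1 + y2)^2) / 2 * kK x1 y1 x2 y2 t"
      unfolding aR_def kK_def
      by (rule id3[OF refl refl]) (use D_pos[OF y1, of x1 t] D_pos[OF y2, of x2 t] in auto)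
    show ?thesis unfolding e by (simp add: algebra_simps)
  qed
  have "integral\<^sup>L lborel (\<lambda>t. W t * aR x1 y1 x2 y2 t) = integral\<^sup>L lborel (\<lambda>t. (W t * inverse ((x1 - t)^2 + y1^2) + W t * inverse ((x2 - t)^2 + y2^2)) / 2
      - ((x1 - x2)^2 + (y1 + y2)^2) / 2 * (W t * kK x1 y1 x2 y2 t))"
    by (rule Bochner_Integration.integral_cong[OF refl pw])
  also have "\<dots> = (Fk k x1 y1 + Fk k x2 y2) / 2
     - ((x1 - x2)^2 + (y1 + y2)^2) / 2 * integral\<^sup>L lborel (\<lambda>t. W t * kK x1 y1 x2 y2 t)"
    unfolding F_eq using F_int[OF y1, of x1] F_int[OF y2, of x2] kK_int[OF y1 y2, of x1 x2] by simp
  finally show ?thesis .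
qed

lemma AR_bd: assumes y1: "0 < y1" and y2: "0 < y2"
  shows "\<bar>integral\<^sup>L lborel (\<lambda>t. W t * aR x1 y1 x2 y2 t)\<bar> \<le> (Fk k x1 y1 + Fk k x2 y2) / 2"
    and "\<bar>integral\<^sup>L lborel (\<lambda>t. W t * aI x1 y1 x2 y2 t)\<bar> \<le> (Fk k x1 y1 + Fk k x2 y2) / 2"
proof -
  have gi: "integrable lborel (\<lambda>t. (W t * inverse ((x1 - t)^2 + y1^2) + W t * inverse ((x2 - t)^2 + y2^2)) / 2)"
    using F_int[OF y1, of x1] F_int[OF y2, of x2] by simp
  have ge: "integral\<^sup>L lborel (\<lambda>t. (W t * inverse ((x1 - t)^2 + y1^2) + W t * inverse ((x2 - t)^2 + y2^2)) / 2)
      = (Fk k x1 y1 + Fk k x2 y2) / 2"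
    unfolding F_eq using F_int[OF y1, of x1] F_int[OF y2, of x2] by simp
  have pw: "\<bar>W t * a\<bar> \<le> (W t * inverse ((x1 - t)^2 + y1^2) + W t * inverse ((x2 - t)^2 + y2^2)) / 2"
    if "\<bar>a\<bar> \<le> (inverse ((x1 - t)^2 + y1^2) + inverse ((x2 - t)^2 + y2^2)) / 2" for a t
  proof -
    have "\<bar>W t * a\<bar> = W t * \<bar>a\<bar>" by (simp add: abs_mult W_nonneg)
    also have "\<dots> \<le> W t * ((inverse ((x1 - t)^2 + y1^2) + inverse ((x2 - t)^2 + y2^2)) / 2)"
      by (rule mult_left_mono[OF that W_nonneg])
    finally show ?thesis by (simp add: algebra_simps)
  qed
  show "\<bar>integral\<^sup>L lborel (\<lambda>t. W t * aR x1 y1 x2 y2 t)\<bar> \<le> (Fk k x1 y1 + Fk k x2 y2) / 2"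
    unfolding ge[symmetric]
    by (rule integral_abs_bound_integral[OF aR_int[OF y1 y2] gi pw[OF aR_bd[OF y1 y2]]])
  show "\<bar>integral\<^sup>L lborel (\<lambda>t. W t * aI x1 y1 x2 y2 t)\<bar> \<le> (Fk k x1 y1 + Fk k x2 y2) / 2"
    unfolding ge[symmetric]
    by (rule integral_abs_bound_integral[OF aI_int[OF y1 y2] gi pw[OF aI_bd[OF y1 y2]]])
qed

lemma K_pos: assumes y1: "0 < y1" and y2: "0 < y2"
  shows "0 < integral\<^sup>L lborel (\<lambda>t. W t * kK x1 y1 x2 y2 t)"
proof (rule pos_int[OF kK_int[OF y1 y2]])
  have kp: "0 < kK x1 y1 x2 y2 t" for t
    unfolding kK_def using D_pos[OF y1, of x1 t] D_pos[OF y2, of x2 t] by simp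
  show "0 \<le> W t * kK x1 y1 x2 y2 t" for t using kp[of t] W_nonneg[of t] by simp
  show "0 < W t * kK x1 y1 x2 y2 t" if "t \<noteq> 0" for t using kp[of t] W_pos[OF that] by simp
qed

end

context kern begin

definition AR where "AR x1 x2 = integral\<^sup>L lborel (\<lambda>t. W t * aR x1 (vk k x1) x2 (vk k x2) t)"
definition AI where "AI x1 x2 = integral\<^sup>L lborel (\<lambda>t. W t * aI x1 (vk k x1) x2 (vk k x2) t)"
definition KK where "KK x1 x2 = integral\<^sup>L lborel (\<lambda>t. W t * kK x1 (vk k x1) x2 (vk k x2) t)"

lemma key:
  shows "1 - AR x1 x2 = ((x1 - x2)^2 + (vk k x1 + vk k x2)^2) / 2 * KK x1 x2"
    and "(vk k x1 - vk k x2) * (1 - AR x1 x2) = (x1 - x2) * AI x1 x2"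
    and "(Pk k x1 - Pk k x2) * (1 - AR x1 x2) = (x1 - x2) * ((1 - AR x1 x2)^2 + (AI x1 x2)^2)"
    and "Pk k x1 - Pk k x2 = (x1 - x2) * (1 - AR x1 x2) + (vk k x1 - vk k x2) * AI x1 x2"
    and "\<bar>AR x1 x2\<bar> \<le> 1" and "\<bar>AI x1 x2\<bar> \<le> 1" and "0 < KK x1 x2"
proof -
  note y1 = v_pos[of x1] and y2 = v_pos[of x2]
  note F1 = v_F[of x1] and F2 = v_F[of x2]
  show "1 - AR x1 x2 = ((x1 - x2)^2 + (vk k x1 + vk k x2)^2) / 2 * KK x1 x2"
    using int_id3[OF y1 y2, of x1 x2] F1 F2 unfolding AR_def KK_def by simp
  have b: "- vk k x1 + vk k x2 = - ((x1 - x2) * AI x1 x2 + (vk k x1 - vk k x2) * AR x1 x2)"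
    using int_id2[OF y1 y2, of x1 x2] F1 F2 unfolding AR_def AI_def by simp
  show c: "(vk k x1 - vk k x2) * (1 - AR x1 x2) = (x1 - x2) * AI x1 x2"
    by (rule alg1[OF b refl refl])
  have P: "Pk k x1 - Pk k x2 = (x1 - x2) - ((x1 - x2) * AR x1 x2 - (vk k x1 - vk k x2) * AI x1 x2)"
    using int_id1[OF y1 y2, of x1 x2] unfolding P_eq AR_def AI_def by simp
  show "(Pk k x1 - Pk k x2) * (1 - AR x1 x2) = (x1 - x2) * ((1 - AR x1 x2)^2 + (AI x1 x2)^2)"
    by (rule alg2[OF P refl c])
  show "Pk k x1 - Pk k x2 = (x1 - x2) * (1 - AR x1 x2) + (vk k x1 - vk k x2) * AI x1 x2"
    unfolding P by (simp add: algebra_simps)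
  show "\<bar>AR x1 x2\<bar> \<le> 1" using AR_bd(1)[OF y1 y2, of x1 x2] F1 F2 unfolding AR_def by simp
  show "\<bar>AI x1 x2\<bar> \<le> 1" using AR_bd(2)[OF y1 y2, of x1 x2] F1 F2 unfolding AI_def by simp
  show "0 < KK x1 x2" unfolding KK_def by (rule K_pos[OF y1 y2])
qed

lemma R_pos: "0 < 1 - AR x1 x2"
proof -
  have "0 < vk k x1 + vk k x2" using v_pos[of x1] v_pos[of x2] by simp
  then have "0 < (x1 - x2)^2 + (vk k x1 + vk k x2)^2" by (simp add: add_nonneg_pos)
  then show ?thesis unfolding key(1) using key(7)[of x1 x2] by simp
qed

lemma P_strict: assumes "x2 < x1" shows "Pk k x2 < Pk k x1"
proof -
  have R: "0 < 1 - AR x1 x2" by (rule R_pos)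
  have "0 < (x1 - x2) * ((1 - AR x1 x2)^2 + (AI x1 x2)^2)"
    using assms R by (intro mult_pos_pos) (simp_all add: add_pos_nonneg)
  then have "0 < (Pk k x1 - Pk k x2) * (1 - AR x1 x2)" unfolding key(3) .
  then have "0 < Pk k x1 - Pk k x2" using R by (simp add: zero_less_mult_iff)
  then show ?thesis by simp
qed

lemma P_diff_bd: "\<bar>Pk k x1 - Pk k x2\<bar> \<le> 2 * \<bar>x1 - x2\<bar> + \<bar>vk k x1 - vk k x2\<bar>"
proof -
  have R: "0 < 1 - AR x1 x2" "1 - AR x1 x2 \<le> 2" using R_pos[of x1 x2] key(5)[of x1 x2] by auto
  have "\<bar>Pk k x1 - Pk k x2\<bar> \<le> \<bar>(x1 - x2) * (1 - AR x1 x2)\<bar> + \<bar>(vk k x1 - vk k x2) * AI x1 x2\<bar>"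
    unfolding key(4) by (rule abs_triangle_ineq)
  also have "\<bar>(x1 - x2) * (1 - AR x1 x2)\<bar> \<le> \<bar>x1 - x2\<bar> * 2"
    unfolding abs_mult using R by (intro mult_left_mono) auto
  also have "\<bar>(vk k x1 - vk k x2) * AI x1 x2\<bar> \<le> \<bar>vk k x1 - vk k x2\<bar> * 1"
    unfolding abs_mult using key(6)[of x1 x2] by (intro mult_left_mono) auto
  finally show ?thesis by simp
qed

lemma v_diff_bd: "\<bar>vk k x1 - vk k x2\<bar> ^ 3 * KK x1 x2 \<le> 2 * \<bar>x1 - x2\<bar>"
proof -
  define dy where "dy = vk k x1 - vk k x2"
  define R where "R = 1 - AR x1 x2"
  have R0: "0 < R" unfolding R_def by (rule R_pos)
  have K0: "0 < KK x1 x2" by (rule key(7))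
  have "\<bar>dy\<bar> * R = \<bar>x1 - x2\<bar> * \<bar>AI x1 x2\<bar>"
    using arg_cong[OF key(2)[of x1 x2], of abs] R0 unfolding dy_def R_def by (simp add: abs_mult)
  also have "\<dots> \<le> \<bar>x1 - x2\<bar>" using key(6)[of x1 x2] by (simp add: mult_left_le)
  finally have a: "\<bar>dy\<bar> * R \<le> \<bar>x1 - x2\<bar>" .
  have "dy^2 \<le> (vk k x1 + vk k x2)^2"
  proof -
    have "\<bar>dy\<bar> \<le> vk k x1 + vk k x2" using v_pos[of x1] v_pos[of x2] unfolding dy_def by linarith
    then have "\<bar>dy\<bar>^2 \<le> (vk k x1 + vk k x2)^2" by (rule power_mono) simp
    then show ?thesis by simp
  qed
  then have "dy^2 \<le> (x1 - x2)^2 + (vk k x1 + vk k x2)^2" by (rule order.trans) simp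
  then have "dy^2 / 2 * KK x1 x2 \<le> R" unfolding R_def key(1) using K0
    by (intro mult_right_mono divide_right_mono) auto
  then have "\<bar>dy\<bar> * (dy^2 / 2 * KK x1 x2) \<le> \<bar>dy\<bar> * R" by (rule mult_left_mono) simp
  then have "\<bar>dy\<bar> * (dy^2 / 2 * KK x1 x2) \<le> \<bar>x1 - x2\<bar>" using a by linarith
  moreover have "\<bar>dy\<bar> * (dy^2 / 2 * KK x1 x2) = \<bar>dy\<bar>^3 * KK x1 x2 / 2"
  proof -
    have g: "\<And>a K::real. a * (a^2 / 2 * K) = a^3 * K / 2" by (simp add: power2_eq_square power3_eq_cube)
    show ?thesis using g[of "\<bar>dy\<bar>" "KK x1 x2"] by simp
  qed
  moreover have g: "\<And>X Y c :: real. X \<le> c \<Longrightarrow> X = Y / 2 \<Longrightarrow> Y \<le> 2 * c" by simp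
  ultimately have "\<bar>dy\<bar>^3 * KK x1 x2 \<le> 2 * \<bar>x1 - x2\<bar>" by blast
  then show ?thesis unfolding dy_def .
qed

end

context kern begin

definition EE where "EE x0 t = 2 * (x0 - t)^2 + 2 + M"
definition kap where "kap x0 = integral\<^sup>L lborel (\<lambda>t. W t * inverse (EE x0 t * EE x0 t))"

lemma EE_ge1: "1 \<le> EE x0 t" unfolding EE_def using M_nonneg by simp

lemma kap_int: "integrable lborel (\<lambda>t. W t * inverse (EE x0 t * EE x0 t))"
proof (rule intW)
  fix t
  have "1 \<le> EE x0 t * EE x0 t" using EE_ge1[of x0 t] by (metis mult_mono' mult_1 zero_le_one)
  moreover have g: "\<And>u::real. 1 \<le> u \<Longrightarrow> \<bar>inverse u\<bar> \<le> 1" by (simp add: inverse_le_1_iff)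
  ultimately show "\<bar>inverse (EE x0 t * EE x0 t)\<bar> \<le> 1" by blast
qed (unfold EE_def, measurable)

lemma kap_pos: "0 < kap x0"
  unfolding kap_def
proof (rule pos_int[OF kap_int])
  have p: "0 < inverse (EE x0 t * EE x0 t)" for t using EE_ge1[of x0 t] by simp
  show "0 \<le> W t * inverse (EE x0 t * EE x0 t)" for t using p[of t] W_nonneg[of t] by simp
  show "0 < W t * inverse (EE x0 t * EE x0 t)" if "t \<noteq> 0" for t using p[of t] W_pos[OF that] by simp
qed

lemma D_le_EE: assumes "\<bar>x1 - x0\<bar> \<le> 1" "y^2 \<le> M" shows "(x1 - t)^2 + y^2 \<le> EE x0 t"
proof -
  have "(x1 - t)^2 = ((x1 - x0) + (x0 - t))^2" by simp
  also have "\<dots> \<le> 2 * (x1 - x0)^2 + 2 * (x0 - t)^2"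
    using zero_le_power2[of "(x1 - x0) - (x0 - t)"] by (simp add: power2_eq_square algebra_simps)
  also have "(x1 - x0)^2 \<le> 1"
  proof -
    have "\<bar>x1 - x0\<bar>^2 \<le> 1^2" by (rule power_mono[OF assms(1)]) simp
    then show ?thesis by simp
  qed
  finally have "(x1 - t)^2 \<le> 2 + 2 * (x0 - t)^2" by simp
  then show ?thesis unfolding EE_def using assms(2) by simp
qed

lemma KK_lower: assumes "\<bar>x1 - x0\<bar> \<le> 1" "\<bar>x2 - x0\<bar> \<le> 1" shows "kap x0 \<le> KK x1 x2"
  unfolding kap_def KK_def
proof (rule integral_mono[OF kap_int kK_int[OF v_pos v_pos]])
  fix t
  let ?D1 = "(x1 - t)^2 + (vk k x1)^2" and ?D2 = "(x2 - t)^2 + (vk k x2)^2"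
  have d1: "?D1 \<le> EE x0 t" by (rule D_le_EE[OF assms(1) v_sq])
  have d2: "?D2 \<le> EE x0 t" by (rule D_le_EE[OF assms(2) v_sq])
  have p1: "0 < ?D1" by (rule D_pos[OF v_pos]) 
  have p2: "0 < ?D2" by (rule D_pos[OF v_pos])
  have "?D1 * ?D2 \<le> EE x0 t * EE x0 t" using d1 d2 p1 p2 by (intro mult_mono) auto
  then have "inverse (EE x0 t * EE x0 t) \<le> inverse (?D1 * ?D2)"
    using p1 p2 by (intro le_imp_inverse_le) auto
  then show "W t * inverse (EE x0 t * EE x0 t) \<le> W t * kK x1 (vk k x1) x2 (vk k x2) t"
    unfolding kK_def by (rule mult_left_mono[OF _ W_nonneg])
qed

lemma P_cont: "continuous_on UNIV (Pk k)"
  unfolding continuous_on_iff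
proof (intro ballI allI impI)
  fix x0 :: real and e :: real
  assume e: "0 < e"
  define \<kappa> where "\<kappa> = kap x0"
  have kp: "0 < \<kappa>" unfolding \<kappa>_def by (rule kap_pos)
  define d where "d = min 1 (min (e / 4) (\<kappa> * (e/2)^3 / 2))"
  have d0: "0 < d" using e kp by (simp add: d_def)
  show "\<exists>d>0. \<forall>x'\<in>UNIV. dist x' x0 < d \<longrightarrow> dist (Pk k x') (Pk k x0) < e"
  proof (intro exI[of _ d] conjI ballI impI d0)
    fix x' assume "dist x' x0 < d"
    then have dx: "\<bar>x' - x0\<bar> < d" by (simp add: dist_real_def)
    define dy where "dy = \<bar>vk k x' - vk k x0\<bar>"
    have dx1: "\<bar>x' - x0\<bar> \<le> 1" using dx by (simp add: d_def)
    have dx2: "\<bar>x' - x0\<bar> < e / 4" using dx by (simp add: d_def)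
    have dx3: "2 * \<bar>x' - x0\<bar> < \<kappa> * (e/2)^3" using dx by (simp add: d_def)
    have "dy^3 * \<kappa> \<le> dy^3 * KK x' x0"
      unfolding \<kappa>_def by (rule mult_left_mono[OF KK_lower[OF dx1]]) (simp_all add: dy_def)
    also have "\<dots> \<le> 2 * \<bar>x' - x0\<bar>" unfolding dy_def by (rule v_diff_bd)
    also have "\<dots> < \<kappa> * (e/2)^3" by (rule dx3)
    finally have "dy^3 * \<kappa> < (e/2)^3 * \<kappa>" by (simp add: mult.commute)
    then have "dy^3 < (e/2)^3" using kp by simp
    then have dyl: "dy < e/2" by (rule power_less_imp_less_base) (use e in simp)
    have "\<bar>Pk k x' - Pk k x0\<bar> \<le> 2 * \<bar>x' - x0\<bar> + dy" unfolding dy_def by (rule P_diff_bd)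
    moreover have "2 * \<bar>x' - x0\<bar> < e / 2" using dx2 by simp
    ultimately have "\<bar>Pk k x' - Pk k x0\<bar> < e" using dyl by linarith
    then show "dist (Pk k x') (Pk k x0) < e" by (simp add: dist_real_def)
  qed
qed

lemma P_surj: "Pk k ` UNIV = UNIV"
proof (intro set_eqI iffI)
  fix b :: real
  define C where "C = \<bar>c0\<bar> + 1 + M"
  have C0: "0 \<le> C" unfolding C_def using M_nonneg by simp
  have near: "\<bar>Pk k x - x\<bar> \<le> C" for x unfolding C_def by (rule P_near)
  have l: "Pk k (b - C - 1) \<le> b" using near[of "b - C - 1"] by linarith
  have r: "b \<le> Pk k (b + C + 1)" using near[of "b + C + 1"] by linarith
  obtain x where "Pk k x = b"
    using IVT'[OF l r _ continuous_on_subset[OF P_cont]] C0 by auto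
  then show "b \<in> Pk k ` UNIV" by blast
qed simp

lemma P_strict_mono: "strict_mono (Pk k)"
  unfolding strict_mono_def using P_strict by blast

lemma P_homeo: "\<exists>g. homeomorphism UNIV UNIV (Pk k) g"
  by (rule homeomorphism_into_1d[OF path_connected_UNIV P_cont P_surj strict_mono_imp_inj_on[OF P_strict_mono]])

end


theorem lemma3p4:
  fixes k :: "real \<Rightarrow> real"
  assumes nonneg: "\<And>t. t \<noteq> 0 \<Longrightarrow> 0 \<le> k t"
    and C2_1: "\<And>t. t \<noteq> 0 \<Longrightarrow> k differentiable (at t)"
    and C2_2: "\<And>t. t \<noteq> 0 \<Longrightarrow> deriv k differentiable (at t)"
    and C2_3: "continuous_on (- {0}) (deriv (deriv k))"
    and bnd: "\<And>m n. m \<le> 2 \<Longrightarrow> n \<le> 2 \<Longrightarrow>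
               bounded ((\<lambda>t. (1 + t^2) ^ m * (deriv ^^ n) k t) ` (- {0}))"
    and incr: "mono_on {..<0} k"
    and decr: "antimono_on {0<..} k"
    and pos: "\<And>t. t \<noteq> 0 \<Longrightarrow> 0 < k t"
  shows "strict_mono (Pk k) \<and> (\<exists>g. homeomorphism UNIV UNIV (Pk k) g)"
proof -
  have "bounded ((\<lambda>t. (1 + t^2) ^ 2 * (deriv ^^ 0) k t) ` (- {0}))" by (rule bnd) auto
  then obtain B where B: "\<And>x. x \<in> (\<lambda>t. (1 + t^2) ^ 2 * k t) ` (- {0}) \<Longrightarrow> norm x \<le> B"
    unfolding bounded_iff by auto
  have kb: "\<bar>(1 + t^2)^2 * k t\<bar> \<le> B" if "t \<noteq> 0" for t
    using B[of "(1 + t^2)^2 * k t"] that by auto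
  have kc: "continuous_on (- {0}) k"
  proof (rule continuous_at_imp_continuous_on, intro ballI)
    fix t :: real assume "t \<in> - {0}"
    then have "k differentiable (at t)" using C2_1 by auto
    then show "isCont k t" by (rule differentiable_imp_continuous_within)
  qed
  interpret kern k B
    by unfold_locales (use kc kb pos incr decr in auto)
  show ?thesis using P_strict_mono P_homeo by blast
qed

end
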